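(* Let $R>0$ and let $\mathbf L\colon\mathbb R^n\times\mathbb R^m\to\mathbb R$ be an $R$-smooth convex-concave function with a saddle point $\mathbf z^\star$. Let $\alpha_0\in(0,\frac{3}{4R})$ and define $$\alpha_{k+1}=\alpha_k\left(1-\frac{1}{(k+1)(k+3)}\,\frac{\alpha_k^2R^2}{1-\alpha_k^2R^2}\right),\qquad k\ge0,$$ and $\alpha_\infty=\lim_{k\to\infty}\alpha_k$. Let $\mathbf z^0\in\mathbb R^n\times\mathbb R^m$ and define the EAG-V iterates $$\mathbf z^{k+1/2}=\mathbf z^k+\tfrac{1}{k+2}(\mathbf z^0-\mathbf z^k)-\alpha_k\mathbf G(\mathbf z^k),\qquad \mathbf z^{k+1}=\mathbf z^k+\tfrac{1}{k+2}(\mathbf z^0-\mathbf z^k)-\alpha_k\mathbf G(\mathbf z^{k+1/2}),\quad k\ge0.$$ Then for all $k\ge0$, $$\|\nabla\mathbf L(\mathbf z^k)\|^2\le\frac{4(1+\alpha_0\alpha_\infty R^2)}{\alpha_\infty^2}\,\frac{\|\mathbf z^0-\mathbf z^\star\|^2}{(k+1)(k+2)}.$$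
   Context: Write $\mathbf z=(\mathbf x,\mathbf y)$. $\mathbf L$ convex-concave: convex in $\mathbf x$ for fixed $\mathbf y$, concave in $\mathbf y$ for fixed $\mathbf x$. A saddle point $(\mathbf x^\star,\mathbf y^\star)$ satisfies $\mathbf L(\mathbf x^\star,\mathbf y)\le\mathbf L(\mathbf x^\star,\mathbf y^\star)\le\mathbf L(\mathbf x,\mathbf y^\star)$ for all $\mathbf x,\mathbf y$. $\mathbf G(\mathbf z)=(\nabla_{\mathbf x}\mathbf L(\mathbf x,\mathbf y),-\nabla_{\mathbf y}\mathbf L(\mathbf x,\mathbf y))$; $\mathbf L$ is $R$-smooth if it is differentiable and $\mathbf G$ is $R$-Lipschitz. $\|\nabla\mathbf L\|=\|\mathbf G\|$. *)

theory Defs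
  imports "HOL-Analysis.Analysis"
begin

type_synonym ('n,'m) pt = "(real^'n) \<times> (real^'m)"

definition grad :: "(('n::finite,'m::finite) pt \<Rightarrow> real) \<Rightarrow> ('n,'m) pt \<Rightarrow> ('n,'m) pt" where
  "grad L z = (SOME g. (L has_derivative (\<lambda>h. g \<bullet> h)) (at z))"

definition saddle_op :: "(('n::finite,'m::finite) pt \<Rightarrow> real) \<Rightarrow> ('n,'m) pt \<Rightarrow> ('n,'m) pt" where
  "saddle_op L z = (fst (grad L z), - snd (grad L z))"

definition convex_concave :: "(('n::finite,'m::finite) pt \<Rightarrow> real) \<Rightarrow> bool" where
  "convex_concave L \<longleftrightarrow>
     (\<forall>y. convex_on UNIV (\<lambda>x. L (x, y))) \<and> (\<forall>x. concave_on UNIV (\<lambda>y. L (x, y)))"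

definition saddle_point :: "(('n::finite,'m::finite) pt \<Rightarrow> real) \<Rightarrow> ('n,'m) pt \<Rightarrow> bool" where
  "saddle_point L zs \<longleftrightarrow>
     (\<forall>x y. L (fst zs, y) \<le> L zs \<and> L zs \<le> L (x, snd zs))"

definition R_smooth :: "real \<Rightarrow> (('n::finite,'m::finite) pt \<Rightarrow> real) \<Rightarrow> bool" where
  "R_smooth R L \<longleftrightarrow> (\<forall>z. L differentiable (at z)) \<and> R-lipschitz_on UNIV (saddle_op L)"

fun eag_alpha :: "real \<Rightarrow> real \<Rightarrow> nat \<Rightarrow> real" where
  "eag_alpha R a0 0 = a0"
| "eag_alpha R a0 (Suc k) =
     (let a = eag_alpha R a0 k in
      a * (1 - 1 / ((real k + 1) * (real k + 3)) * (a^2 * R^2 / (1 - a^2 * R^2))))"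

fun eag_z :: "(('n::finite,'m::finite) pt \<Rightarrow> real) \<Rightarrow> real \<Rightarrow> real \<Rightarrow> ('n,'m) pt \<Rightarrow> nat \<Rightarrow> ('n,'m) pt" where
  "eag_z L R a0 z0 0 = z0"
| "eag_z L R a0 z0 (Suc k) =
     (let zk = eag_z L R a0 z0 k;
          a = eag_alpha R a0 k;
          zh = zk + (1 / (real k + 2)) *\<^sub>R (z0 - zk) - a *\<^sub>R saddle_op L zk
      in zk + (1 / (real k + 2)) *\<^sub>R (z0 - zk) - a *\<^sub>R saddle_op L zh)"

end

theory Submission
  imports Defs
begin


lemma convex_tangent:
  fixes f :: "'a::real_normed_vector \<Rightarrow> real"
  assumes cv: "convex_on UNIV f" and d: "(f has_derivative f') (at x)"
  shows "f x + f' (y - x) \<le> f y"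
proof -
  define dd where "dd = y - x"
  define \<phi> where "\<phi> = (\<lambda>t::real. f (x + t *\<^sub>R dd))"
  have cphi: "convex_on UNIV \<phi>"
  proof (rule convex_onI)
    fix u s t :: real assume "0 < u" "u < 1"
    have "x + ((1 - u) *\<^sub>R s + u *\<^sub>R t) *\<^sub>R dd = (1 - u) *\<^sub>R (x + s *\<^sub>R dd) + u *\<^sub>R (x + t *\<^sub>R dd)"
      by (simp add: algebra_simps)
    then show "\<phi> ((1 - u) *\<^sub>R s + u *\<^sub>R t) \<le> (1 - u) * \<phi> s + u * \<phi> t"
      unfolding \<phi>_def using convex_onD[OF cv, of u "x + s *\<^sub>R dd" "x + t *\<^sub>R dd"] \<open>0 < u\<close> \<open>u < 1\<close>
      by simp
  qed auto
  have bl: "bounded_linear f'" using d by (rule has_derivative_bounded_linear)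
  have g: "((\<lambda>t::real. x + t *\<^sub>R dd) has_derivative (\<lambda>s. s *\<^sub>R dd)) (at 0)"
    by (auto intro!: derivative_eq_intros)
  have d0: "(f has_derivative f') (at (x + 0 *\<^sub>R dd))" using d by simp
  have "(\<phi> has_derivative (\<lambda>s. f' (s *\<^sub>R dd))) (at 0)"
    unfolding \<phi>_def using has_derivative_compose[OF g d0] by simp
  moreover have "(\<lambda>s. f' (s *\<^sub>R dd)) = (\<lambda>s. f' dd * s)"
    using linear_cmul[OF bounded_linear.linear[OF bl]] by (auto simp: mult.commute)
  ultimately have "(\<phi> has_field_derivative f' dd) (at 0)"
    by (simp add: has_field_derivative_def)
  then have "\<phi> 1 - \<phi> 0 \<ge> f' dd * (1 - 0)"
    by (intro convex_on_imp_above_tangent[OF cphi]) auto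
  then show ?thesis by (simp add: \<phi>_def dd_def)
qed

lemma concave_tangent:
  fixes f :: "'a::real_normed_vector \<Rightarrow> real"
  assumes cv: "concave_on UNIV f" and d: "(f has_derivative f') (at x)"
  shows "f y \<le> f x + f' (y - x)"
proof -
  have "convex_on UNIV (\<lambda>x. - f x)" using cv by (simp add: concave_on_def)
  moreover have "((\<lambda>x. - f x) has_derivative (\<lambda>h. - f' h)) (at x)"
    using d by (auto intro!: derivative_eq_intros)
  ultimately have "- f x + - f' (y - x) \<le> - f y" by (rule convex_tangent)
  then show ?thesis by simp
qed

lemma grad_deriv:
  fixes L :: "('n::finite,'m::finite) pt \<Rightarrow> real"
  assumes "L differentiable (at z)"
  shows "(L has_derivative (\<lambda>h. grad L z \<bullet> h)) (at z)"
proof -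
  obtain f' where d: "(L has_derivative f') (at z)" using assms by (auto simp: differentiable_def)
  have lin: "linear f'" using has_derivative_linear[OF d] .
  have "f' = (\<lambda>h. adjoint f' 1 \<bullet> h)"
    using adjoint_clauses(2)[OF lin, of 1] by (auto simp: fun_eq_iff)
  then have "\<exists>g. (L has_derivative (\<lambda>h. g \<bullet> h)) (at z)" using d by metis
  then show ?thesis unfolding grad_def by (rule someI_ex)
qed

lemma partial_x:
  fixes L :: "('n::finite,'m::finite) pt \<Rightarrow> real"
  assumes "L differentiable (at (x,y))"
  shows "((\<lambda>x. L (x, y)) has_derivative (\<lambda>h. fst (grad L (x,y)) \<bullet> h)) (at x)"
proof -
  have g: "((\<lambda>x. (x, y)) has_derivative (\<lambda>h. (h, 0))) (at x)"
    by (auto intro!: derivative_eq_intros)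
  show ?thesis using has_derivative_compose[OF g grad_deriv[OF assms]]
    by (simp add: inner_Pair_0)
qed

lemma partial_y:
  fixes L :: "('n::finite,'m::finite) pt \<Rightarrow> real"
  assumes "L differentiable (at (x,y))"
  shows "((\<lambda>y. L (x, y)) has_derivative (\<lambda>h. snd (grad L (x,y)) \<bullet> h)) (at y)"
proof -
  have g: "((\<lambda>y. (x, y)) has_derivative (\<lambda>h. (0, h))) (at y)"
    by (auto intro!: derivative_eq_intros)
  show ?thesis using has_derivative_compose[OF g grad_deriv[OF assms]]
    by (simp add: inner_Pair_0)
qed



lemma tx:
  fixes L :: "('n::finite,'m::finite) pt \<Rightarrow> real"
  assumes "R_smooth R L" "convex_concave L"
  shows "L (x,y) + fst (grad L (x,y)) \<bullet> (x' - x) \<le> L (x',y)"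
proof -
  have "L differentiable (at (x,y))" using assms(1) by (simp add: R_smooth_def)
  from convex_tangent[OF _ partial_x[OF this], of x'] assms(2) show ?thesis
    by (simp add: convex_concave_def)
qed

lemma ty:
  fixes L :: "('n::finite,'m::finite) pt \<Rightarrow> real"
  assumes "R_smooth R L" "convex_concave L"
  shows "L (x,y') \<le> L (x,y) + snd (grad L (x,y)) \<bullet> (y' - y)"
proof -
  have "L differentiable (at (x,y))" using assms(1) by (simp add: R_smooth_def)
  from concave_tangent[OF _ partial_y[OF this], of y'] assms(2) show ?thesis
    by (simp add: convex_concave_def)
qed

lemma G_inner:
  "saddle_op L z \<bullet> w = fst (grad L z) \<bullet> fst w - snd (grad L z) \<bullet> snd w"
  by (simp add: saddle_op_def inner_prod_def)

lemma G_mono: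
  fixes L :: "('n::finite,'m::finite) pt \<Rightarrow> real"
  assumes "R_smooth R L" "convex_concave L"
  shows "0 \<le> (saddle_op L z - saddle_op L w) \<bullet> (z - w)"
proof -
  obtain x y where z: "z = (x,y)" by force
  obtain x' y' where w: "w = (x',y')" by force
  have 1: "L (x,y) + fst (grad L (x,y)) \<bullet> (x' - x) \<le> L (x',y)" by (rule tx[OF assms])
  have 2: "L (x,y') \<le> L (x,y) + snd (grad L (x,y)) \<bullet> (y' - y)" by (rule ty[OF assms])
  have 3: "L (x',y') + fst (grad L (x',y')) \<bullet> (x - x') \<le> L (x,y')" by (rule tx[OF assms])
  have 4: "L (x',y) \<le> L (x',y') + snd (grad L (x',y')) \<bullet> (y - y')" by (rule ty[OF assms])
  show ?thesis using 1 2 3 4 unfolding z w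
    by (simp add: saddle_op_def inner_diff_left inner_diff_right)
qed

lemma G_star:
  fixes L :: "('n::finite,'m::finite) pt \<Rightarrow> real"
  assumes "R_smooth R L" "convex_concave L" "saddle_point L zs"
  shows "0 \<le> saddle_op L z \<bullet> (z - zs)"
proof -
  obtain x y where z: "z = (x,y)" by force
  obtain x' y' where w: "zs = (x',y')" by force
  have 1: "L (x,y) + fst (grad L (x,y)) \<bullet> (x' - x) \<le> L (x',y)" by (rule tx[OF assms(1,2)])
  have 2: "L (x,y') \<le> L (x,y) + snd (grad L (x,y)) \<bullet> (y' - y)" by (rule ty[OF assms(1,2)])
  have 3: "L (x', y) \<le> L (x', y')" "L (x', y') \<le> L (x, y')"
    using assms(3) unfolding saddle_point_def w by auto
  show ?thesis using 1 2 3 unfolding z w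
    by (simp add: saddle_op_def inner_diff_left inner_diff_right)
qed

lemma G_lip:
  fixes L :: "('n::finite,'m::finite) pt \<Rightarrow> real"
  assumes "R_smooth R L"
  shows "norm (saddle_op L z - saddle_op L w) \<le> R * norm (z - w)"
  using lipschitz_onD[of R UNIV "saddle_op L" z w] assms
  by (simp add: R_smooth_def dist_norm)

lemma G_zs:
  fixes L :: "('n::finite,'m::finite) pt \<Rightarrow> real"
  assumes "R > 0" "R_smooth R L" "convex_concave L" "saddle_point L zs"
  shows "saddle_op L zs = 0"
proof -
  define v where "v = saddle_op L zs"
  define z1 where "z1 = zs - (1/(2*R)) *\<^sub>R v"
  have "0 \<le> saddle_op L z1 \<bullet> (z1 - zs)" by (rule G_star[OF assms(2-4)])
  then have a: "saddle_op L z1 \<bullet> v \<le> 0" using assms(1) by (simp add: z1_def divide_le_0_iff)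
  have "norm (saddle_op L z1 - v) \<le> R * norm (z1 - zs)" unfolding v_def by (rule G_lip[OF assms(2)])
  also have "\<dots> = norm v / 2" using assms(1) by (simp add: z1_def divide_le_0_iff)
  finally have b: "norm (v - saddle_op L z1) \<le> norm v / 2" by (simp add: norm_minus_commute)
  have "v \<bullet> v = (v - saddle_op L z1) \<bullet> v + saddle_op L z1 \<bullet> v" by (simp add: inner_diff_left)
  also have "\<dots> \<le> norm (v - saddle_op L z1) * norm v + 0"
    using a norm_cauchy_schwarz[of "v - saddle_op L z1" v] by linarith
  also have "\<dots> \<le> norm v / 2 * norm v" using mult_right_mono[OF b, of "norm v"] by simp
  finally have "norm v ^ 2 \<le> norm v ^ 2 / 2" by (simp add: power2_norm_eq_inner[symmetric] power2_eq_square)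
  then show ?thesis unfolding v_def by simp
qed

lemma norm_G: "norm (saddle_op L z) = norm (grad L z)"
proof -
  obtain a b where "grad L z = (a,b)" by force
  then show ?thesis by (simp add: saddle_op_def norm_Pair)
qed



lemma alpha_Suc: "eag_alpha R a0 (Suc k) =
   eag_alpha R a0 k * (1 - 1 / ((real k + 1) * (real k + 3)) *
     ((eag_alpha R a0 k)^2 * R^2 / (1 - (eag_alpha R a0 k)^2 * R^2)))"
  by (simp add: Let_def)

lemma S_step_gen: fixes x :: real assumes "0 \<le> x"
  shows "3/4 - (1/(x + 2) + 1/(x + 3))/2 = 3/4 - (1/(x + 1) + 1/(x + 2))/2 + 1 / ((x + 1) * (x + 3))"
proof -
  have p: "x + 1 \<noteq> 0" "x + 2 \<noteq> 0" "x + 3 \<noteq> 0" using assms by linarith+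
  have "1/(x+1) - 1/(x+3) = 2 * (1/((x+1)*(x+3)))" using p by (simp add: diff_frac_eq)
  moreover have "\<And>u w t v::real. u - w = 2 * v \<Longrightarrow> 3/4 - (t + w)/2 = 3/4 - (u + t)/2 + v" by (simp add: field_simps)
  ultimately show ?thesis by blast
qed

lemma S_step: "3/4 - (1/(real k + 2) + 1/(real k + 3))/2 =
   3/4 - (1/(real k + 1) + 1/(real k + 2))/2 + 1 / ((real k + 1) * (real k + 3))"
  by (rule S_step_gen) simp

lemma S_le: "1/(real k + 1) + 1/(real k + 2) \<ge> (0::real)" by simp

lemma alpha_bounds:
  assumes R: "R > 0" and a0: "0 < a0" "a0 < 3 / (4 * R)"
  defines "\<gamma> \<equiv> a0^2 * R^2 / (1 - a0^2 * R^2)"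
  shows "a0 * (1 - \<gamma> * (3/4 - (1/(real k + 1) + 1/(real k + 2))/2)) \<le> eag_alpha R a0 k
         \<and> eag_alpha R a0 k \<le> a0"
proof (induction k)
  case 0
  then show ?case by simp
next
  case (Suc k)
  define a where "a = eag_alpha R a0 k"
  define S where "S = 3/4 - (1/(real k + 1) + 1/(real k + 2))/2"
  define c where "c = 1 / ((real k + 1) * (real k + 3))"
  have aR: "a0 * R < 3/4" using a0 R by (simp add: field_simps)
  have t: "a0^2 * R^2 < 9/16"
  proof -
    have "(a0 * R)^2 < (3/4)^2" using aR a0 R by (intro power_strict_mono) auto
    moreover have "(a0 * R)^2 = a0^2 * R^2" by (simp add: power_mult_distrib)
    ultimately show ?thesis by (simp add: power2_eq_square mult_ac)
  qed
  have g0: "0 \<le> \<gamma>" using t unfolding \<gamma>_def by simp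
  have g1: "\<gamma> < 9/7" using t unfolding \<gamma>_def by (simp add: field_simps)
  have "1/(real k + 1) \<le> 1" "1/(real k + 2) \<le> 1/2" "0 \<le> 1/(real k + 1)" "0 \<le> 1/(real k + 2)"
    by (auto simp: divide_simps)
  moreover have "\<And>p q::real. p \<le> 1 \<Longrightarrow> q \<le> 1/2 \<Longrightarrow> 0 \<le> p \<Longrightarrow> 0 \<le> q \<Longrightarrow> 0 \<le> 3/4 - (p + q)/2 \<and> 3/4 - (p + q)/2 \<le> 3/4"
    by (simp add: field_simps)
  ultimately have S0: "0 \<le> S" "S \<le> 3/4" unfolding S_def by blast+
  have d: "3 \<le> (real k + 1) * (real k + 3)" using mult_mono[of 1 "real k+1" 3 "real k+3"] by simp
  have "\<And>D::real. 3 \<le> D \<Longrightarrow> 0 < 1/D \<and> 1/D \<le> 1/3" by (simp add: field_simps)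
  from this[OF d] have c0: "0 < c" "c \<le> 1/3" unfolding c_def by auto
  have IH: "a0 * (1 - \<gamma> * S) \<le> a" "a \<le> a0" using Suc.IH unfolding a_def S_def by auto
  have gS: "\<gamma> * S \<le> 27/28" using mult_mono[OF less_imp_le[OF g1] S0(2)] g0 S0(1) by simp
  have "0 < a0 * (1 - \<gamma> * S)" using a0 gS by simp
  then have apos: "0 < a" using IH(1) by linarith
  have r1: "a^2 * R^2 \<le> a0^2 * R^2" using IH(2) apos R
    by (intro mult_right_mono power_mono) auto
  define r where "r = a^2 * R^2"
  have r0: "0 \<le> r" "r < 1" using r1 t unfolding r_def by auto
  have x: "r / (1 - r) \<le> \<gamma>" unfolding \<gamma>_def using r0 r1 t unfolding r_def
    by (intro frac_le) auto
  have x0: "0 \<le> r / (1 - r)" using r0 by simp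
  have cg: "c * \<gamma> \<le> 3/7" using mult_mono[OF c0(2) less_imp_le[OF g1]] c0 g0 by simp
  have cx: "c * (r / (1 - r)) \<le> c * \<gamma>" using mult_left_mono[OF x, of c] c0 by simp
  have step: "eag_alpha R a0 (Suc k) = a * (1 - c * (r / (1 - r)))"
    unfolding alpha_Suc a_def c_def r_def by simp
  have cx0: "0 \<le> c * (r / (1 - r))" using c0 x0 by (intro mult_nonneg_nonneg) auto
  have "a * (1 - c * (r / (1 - r))) \<le> a * 1" using apos cx0 by (intro mult_left_mono) auto
  then have up: "a * (1 - c * (r / (1 - r))) \<le> a0" using IH(2) by linarith
  have "a0 * (1 - \<gamma> * (S + c)) \<le> a0 * (1 - \<gamma> * S) * (1 - c * \<gamma>)"
  proof -
    have "0 \<le> a0 * (\<gamma> * S * (c * \<gamma>))" using a0 g0 S0 c0 by simp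
    then show ?thesis by (simp add: algebra_simps)
  qed
  also have "\<dots> \<le> a * (1 - c * \<gamma>)" using IH(1) cg by (intro mult_right_mono) auto
  also have "\<dots> \<le> a * (1 - c * (r / (1 - r)))" using cx apos by (intro mult_left_mono) auto
  finally have low: "a0 * (1 - \<gamma> * (S + c)) \<le> eag_alpha R a0 (Suc k)" using step by simp
  have "S + c = 3/4 - (1/(real (Suc k) + 1) + 1/(real (Suc k) + 2))/2"
    unfolding S_def c_def using S_step[of k] by (simp add: add.commute)
  then show ?case using low up step by simp
qed



lemma alpha_facts:
  assumes R: "R > 0" and a0: "0 < a0" "a0 < 3 / (4 * R)"
  defines "\<gamma> \<equiv> a0^2 * R^2 / (1 - a0^2 * R^2)"
  shows "a0 * (1 - \<gamma> * (3/4)) \<le> eag_alpha R a0 k" "0 < a0 * (1 - \<gamma> * (3/4))"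
    "eag_alpha R a0 k \<le> a0" "(eag_alpha R a0 k)^2 * R^2 < 1"
    "eag_alpha R a0 (Suc k) \<le> eag_alpha R a0 k"
proof -
  define a where "a = eag_alpha R a0 k"
  define S where "S = 3/4 - (1/(real k + 1) + 1/(real k + 2))/2"
  have B: "a0 * (1 - \<gamma> * S) \<le> a" "a \<le> a0"
    using alpha_bounds[OF assms(1-3), of k] unfolding a_def S_def \<gamma>_def by auto
  have aR: "a0 * R < 3/4" using a0 R by (simp add: field_simps)
  have t: "a0^2 * R^2 < 9/16"
  proof -
    have "(a0 * R)^2 < (3/4)^2" using aR a0 R by (intro power_strict_mono) auto
    moreover have "(a0 * R)^2 = a0^2 * R^2" by (simp add: power_mult_distrib)
    ultimately show ?thesis by (simp add: power2_eq_square mult_ac)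
  qed
  have g0: "0 \<le> \<gamma>" using t unfolding \<gamma>_def by simp
  have g1: "\<gamma> < 9/7" using t unfolding \<gamma>_def by (simp add: field_simps)
  have "1/(real k + 1) \<le> 1" "1/(real k + 2) \<le> 1/2" "0 \<le> 1/(real k + 1)" "0 \<le> 1/(real k + 2)"
    by (auto simp: divide_simps)
  moreover have "\<And>p q::real. p \<le> 1 \<Longrightarrow> q \<le> 1/2 \<Longrightarrow> 0 \<le> p \<Longrightarrow> 0 \<le> q \<Longrightarrow> 0 \<le> 3/4 - (p + q)/2 \<and> 3/4 - (p + q)/2 \<le> 3/4"
    by (simp add: field_simps)
  ultimately have S0: "0 \<le> S" "S \<le> 3/4" unfolding S_def by blast+
  have "\<gamma> * S \<le> \<gamma> * (3/4)" using mult_left_mono[OF S0(2) g0] .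
  then show "a0 * (1 - \<gamma> * (3/4)) \<le> eag_alpha R a0 k" using B(1) a0 unfolding a_def
    by (smt (verit) mult_left_mono)
  have "\<gamma> * (3/4) < 1" using g1 by simp
  then show dpos: "0 < a0 * (1 - \<gamma> * (3/4))" using a0 by simp
  show "eag_alpha R a0 k \<le> a0" using B unfolding a_def by simp
  have apos: "0 < a" using B dpos \<open>a0 * (1 - \<gamma> * (3/4)) \<le> eag_alpha R a0 k\<close> unfolding a_def by linarith
  have r1: "a^2 * R^2 \<le> a0^2 * R^2" using B(2) apos R
    by (intro mult_right_mono power_mono) auto
  then show "(eag_alpha R a0 k)^2 * R^2 < 1" using t unfolding a_def by linarith
  define r where "r = a^2 * R^2"
  have r0: "0 \<le> r" "r < 1" using r1 t unfolding r_def by auto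
  define c where "c = 1 / ((real k + 1) * (real k + 3))"
  have c0: "0 \<le> c" unfolding c_def by simp
  have x0: "0 \<le> r / (1 - r)" using r0 by simp
  have cx0: "0 \<le> c * (r / (1 - r))" using c0 x0 by (intro mult_nonneg_nonneg) auto
  have step: "eag_alpha R a0 (Suc k) = a * (1 - c * (r / (1 - r)))"
    unfolding alpha_Suc a_def c_def r_def by simp
  have "a * (1 - c * (r / (1 - r))) \<le> a * 1" using apos cx0 by (intro mult_left_mono) auto
  then show "eag_alpha R a0 (Suc k) \<le> eag_alpha R a0 k" using step unfolding a_def by simp
qed

lemma alpha_lim:
  assumes R: "R > 0" and a0: "0 < a0" "a0 < 3 / (4 * R)"
  shows "0 < lim (eag_alpha R a0)" "\<And>k. lim (eag_alpha R a0) \<le> eag_alpha R a0 k"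
proof -
  define \<gamma> where "\<gamma> = a0^2 * R^2 / (1 - a0^2 * R^2)"
  define \<delta> where "\<delta> = a0 * (1 - \<gamma> * (3/4))"
  have lb: "\<And>k. \<delta> \<le> eag_alpha R a0 k" and dpos: "0 < \<delta>"
    using alpha_facts[OF assms] unfolding \<delta>_def \<gamma>_def by auto
  have dec: "decseq (eag_alpha R a0)"
    using alpha_facts(5)[OF assms] by (simp add: decseq_Suc_iff)
  obtain Lm where Lm: "eag_alpha R a0 \<longlonglongrightarrow> Lm" "\<forall>i. Lm \<le> eag_alpha R a0 i"
    using decseq_convergent[OF dec, of \<delta>] lb by blast
  have l: "lim (eag_alpha R a0) = Lm" using Lm(1) by (rule limI)
  have "\<delta> \<le> Lm" using Lm(1) lb by (intro LIMSEQ_le_const) auto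
  then show "0 < lim (eag_alpha R a0)" using dpos l by simp
  show "\<And>k. lim (eag_alpha R a0) \<le> eag_alpha R a0 k" using Lm(2) l by simp
qed



lemma disc_norm:
  fixes K r D :: real
  assumes "r \<noteq> 0" "D \<noteq> 0" "D = (K - 1) * (K + 1) * (1 - r)"
  shows "4 * ((K-1)*K/(2*r) - (K-1)*K/2) * ((K-1)*K/(2*r) - (1 - r/D)*K*(K+1)/2) = (K^2 - (K-1)*K/r)^2"
proof -
  have "4 * ((K-1)*K/(2*r) - (K-1)*K/2) * ((K-1)*K/(2*r) - (1 - r/D)*K*(K+1)/2) * (r^2 * D)
        = ((K-1)*K - (K-1)*K*r) * ((K-1)*K*D - (D - r)*K*(K+1)*r)"
    using assms(1,2) by (simp add: field_simps power2_eq_square)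
  also have "\<dots> = (K^2 * r - (K-1)*K)^2 * D"
    unfolding assms(3) by algebra
  also have "\<dots> = (K^2 - (K-1)*K/r)^2 * (r^2 * D)"
    using assms(1) by (simp add: field_simps power2_eq_square)
  finally show ?thesis using assms(1,2) by simp
qed


lemma disc_id:
  fixes K al R :: real
  assumes K: "K \<ge> 2" and al: "al > 0" and R: "R > 0" and r: "al^2 * R^2 < 1"
  shows "4 * ((K - 1) * K / (2 * al * R^2) - al * (K - 1) * K / 2) *
          ((K - 1) * K / (2 * al * R^2) - al * (1 - 1 / ((K - 1) * (K + 1)) * (al^2 * R^2 / (1 - al^2 * R^2))) * K * (K + 1) / 2)
         = (K^2 * al - 2 * ((K - 1) * K / (2 * al * R^2)))^2"
proof -
  define r where "r = al^2 * R^2"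
  define D where "D = (K - 1) * (K + 1) * (1 - r)"
  have r0: "r \<noteq> 0" using al R unfolding r_def by simp
  have D0: "D \<noteq> 0" using K r unfolding D_def r_def by simp
  have m: "(K - 1) * K / (2 * al * R^2) = al * ((K-1)*K/(2*r))"
    unfolding r_def using al R by (simp add: field_simps power2_eq_square)
  have p: "1 - 1 / ((K - 1) * (K + 1)) * (al^2 * R^2 / (1 - al^2 * R^2)) = 1 - r / D"
    unfolding D_def r_def by simp
  have "4 * ((K - 1) * K / (2 * al * R^2) - al * (K - 1) * K / 2) *
          ((K - 1) * K / (2 * al * R^2) - al * (1 - r / D) * K * (K + 1) / 2)
        = al^2 * (4 * ((K-1)*K/(2*r) - (K-1)*K/2) * ((K-1)*K/(2*r) - (1 - r/D)*K*(K+1)/2))"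
    unfolding m by algebra
  also have "\<dots> = al^2 * (K^2 - (K-1)*K/r)^2"
    using disc_norm[OF r0 D0 D_def] by simp
  also have "\<dots> = (K^2 * al - 2 * (al * ((K-1)*K/(2*r))))^2"
  proof -
    have "2 * (al * ((K-1)*K/(2*r))) = al * ((K-1)*K/r)" by simp
    moreover have "K^2 * al - al * ((K-1)*K/r) = al * (K^2 - (K-1)*K/r)" by (simp add: algebra_simps)
    ultimately show ?thesis by (simp add: power_mult_distrib)
  qed
  finally show ?thesis unfolding p m .
qed

lemma key_scalar:
  fixes K al al' R gg hh pp gh hp ug up :: real
  assumes K: "K \<ge> 2" and al: "al > 0" and R: "R > 0" and r: "al^2 * R^2 < 1"
    and al': "al' = al * (1 - 1 / ((K - 1) * (K + 1)) * (al^2 * R^2 / (1 - al^2 * R^2)))"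
    and mono: "0 \<le> - (1/K) * (up - ug) - al * (hp - gh)"
    and lip: "pp - 2 * hp + hh \<le> R^2 * al^2 * (gg - 2 * gh + hh)"
    and sq: "0 \<le> ((K - 1) * K / (2 * al * R^2) - al * (K - 1) * K / 2)^2 * hh
               + ((K - 1) * K / (2 * al * R^2) - al * (K - 1) * K / 2) * (K^2 * al - 2 * ((K - 1) * K / (2 * al * R^2))) * hp
               + (K^2 * al - 2 * ((K - 1) * K / (2 * al * R^2)))^2 / 4 * pp"
  shows "al' * K * (K + 1) / 2 * pp + K * ((1 - 1/K) * up - al * hp) \<le> al * (K - 1) * K / 2 * gg + (K - 1) * ug"
proof -
  define mu where "mu = (K - 1) * K / (2 * al * R^2)"
  define A where "A = al * (K - 1) * K / 2"
  define A' where "A' = al' * K * (K + 1) / 2"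
  define a where "a = mu - A"
  define b where "b = K^2 * al - 2 * mu"
  define c where "c = mu - A'"
  have K0: "K \<noteq> 0" using K by simp
  have mu0: "0 < mu" unfolding mu_def using K al R by simp
  have muA: "mu * (R^2 * al^2) = A" unfolding mu_def A_def using al R by (simp add: field_simps power2_eq_square)
  have lg: "0 \<le> A * (gg - 2 * gh + hh) - mu * (pp - 2 * hp + hh)"
  proof -
    have "mu * (pp - 2 * hp + hh) \<le> mu * (R^2 * al^2 * (gg - 2 * gh + hh))"
      using mult_left_mono[OF lip] mu0 by simp
    then show ?thesis using muA by (simp add: mult.assoc[symmetric])
  qed
  have mono': "0 \<le> (K - 1) * K * (- (1/K) * (up - ug) - al * (hp - gh))"
    using mono K by simp
  have id: "(A * gg + (K - 1) * ug) - (A' * pp + K * ((1 - 1/K) * up - al * hp))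
       = (K - 1) * K * (- (1/K) * (up - ug) - al * (hp - gh))
         + (A * (gg - 2 * gh + hh) - mu * (pp - 2 * hp + hh)) + (a * hh + b * hp + c * pp)"
    unfolding a_def b_def c_def A_def using K0 by (simp add: field_simps power2_eq_square)
  have ac: "4 * a * c = b^2"
    unfolding a_def b_def c_def A_def A'_def mu_def al' using disc_id[OF K al R r] by simp
  have a0: "0 < a"
  proof -
    have "a = mu * (1 - al^2 * R^2)" unfolding a_def using muA by (simp add: algebra_simps)
    then show ?thesis using mu0 r by simp
  qed
  have "a * (a * hh + b * hp + c * pp) = a^2 * hh + a * b * hp + b^2 / 4 * pp"
    using ac by (simp add: algebra_simps power2_eq_square)
  then have "0 \<le> a * (a * hh + b * hp + c * pp)" using sq unfolding a_def b_def mu_def A_def by simp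
  then have Q: "0 \<le> a * hh + b * hp + c * pp" using a0 by (simp add: zero_le_mult_iff)
  have "0 \<le> (A * gg + (K - 1) * ug) - (A' * pp + K * ((1 - 1/K) * up - al * hp))"
    using id mono' lg Q by linarith
  then show ?thesis unfolding A_def A'_def by simp
qed



lemma final_alg:
  fixes k ai al x D R a0 :: real
  assumes k: "0 \<le> k" and ai: "0 < ai" "ai \<le> al" and x: "0 \<le> x" and D: "0 \<le> D" and a0: "0 < a0"
    and h: "al * (k + 1) * (k + 2) / 2 * x^2 - (k + 1) * x * D \<le> a0 * R^2 * D^2"
  shows "x^2 \<le> 4 * (1 + a0 * ai * R^2) / ai^2 * D^2 / ((k + 1) * (k + 2))"
proof -
  define A0 where "A0 = ai * (k + 1) * (k + 2) / 2"
  define B where "B = k + 1"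
  define c where "c = a0 * R^2 * D^2"
  have A0p: "0 < A0" unfolding A0_def using ai k by simp
  have "A0 * x^2 \<le> al * (k + 1) * (k + 2) / 2 * x^2"
    unfolding A0_def using ai k x by (intro mult_right_mono) auto
  then have h1: "A0 * x^2 \<le> c + B * x * D" using h unfolding c_def B_def by linarith
  have sq: "0 \<le> (A0 * x - B * D)^2" by simp
  then have sq': "2 * A0 * B * x * D \<le> A0^2 * x^2 + B^2 * D^2" by (simp add: power2_eq_square algebra_simps)
  have "2 * A0 * (A0 * x^2) \<le> 2 * A0 * (c + B * x * D)" using h1 A0p by (intro mult_left_mono) auto
  then have h2: "A0^2 * x^2 \<le> 2 * A0 * c + B^2 * D^2" using sq' by (simp add: power2_eq_square algebra_simps)
  have e1: "A0^2 * x^2 = (ai^2 * (k + 1) * (k + 2) * x^2) * ((k + 1) * (k + 2) / 4)"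
    unfolding A0_def by (simp add: field_simps power2_eq_square)
  have e2: "2 * A0 * c + B^2 * D^2 = (4 * a0 * ai * R^2 * D^2 + 4 * (k + 1) / (k + 2) * D^2) * ((k + 1) * (k + 2) / 4)"
    unfolding A0_def c_def B_def using k by (simp add: field_simps power2_eq_square)
  have pos: "0 < (k + 1) * (k + 2) / 4" using k by simp
  have h3: "ai^2 * (k + 1) * (k + 2) * x^2 \<le> 4 * a0 * ai * R^2 * D^2 + 4 * (k + 1) / (k + 2) * D^2"
    using h2 unfolding e1 e2 using pos by (simp add: mult_le_cancel_right)
  have "(k + 1) / (k + 2) \<le> 1" using k by simp
  then have "(k + 1) / (k + 2) * (4 * D^2) \<le> 1 * (4 * D^2)" using D
    by (intro mult_right_mono) auto
  moreover have "(k + 1) / (k + 2) * (4 * D^2) = 4 * (k + 1) / (k + 2) * D^2" by simp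
  ultimately have "4 * (k + 1) / (k + 2) * D^2 \<le> 4 * D^2" by (metis mult_1)
  with h3 have h4: "ai^2 * (k + 1) * (k + 2) * x^2 \<le> 4 * (1 + a0 * ai * R^2) * D^2"
    by (simp add: algebra_simps)
  have p2: "0 < ai^2 * ((k + 1) * (k + 2))" using ai k by simp
  have "x^2 \<le> 4 * (1 + a0 * ai * R^2) * D^2 / (ai^2 * ((k + 1) * (k + 2)))"
    using h4 p2 by (simp add: le_divide_eq mult.assoc mult.commute mult.left_commute)
  then show ?thesis by (simp add: mult.assoc)
qed



lemma z_Suc: "eag_z L R a0 z0 (Suc k) =
  eag_z L R a0 z0 k + (1 / (real k + 2)) *\<^sub>R (z0 - eag_z L R a0 z0 k)
   - eag_alpha R a0 k *\<^sub>R saddle_op L (eag_z L R a0 z0 k + (1 / (real k + 2)) *\<^sub>R (z0 - eag_z L R a0 z0 k)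
        - eag_alpha R a0 k *\<^sub>R saddle_op L (eag_z L R a0 z0 k))"
  by (simp add: Let_def)

lemma V_step:
  fixes L :: "('n::finite,'m::finite) pt \<Rightarrow> real" and z0 :: "('n,'m) pt"
  assumes R: "R > 0" and sm: "R_smooth R L" and cc: "convex_concave L"
    and a0: "0 < a0" "a0 < 3 / (4 * R)"
  defines "V \<equiv> \<lambda>k. eag_alpha R a0 k * (real k + 1) * (real k + 2) / 2 * (norm (saddle_op L (eag_z L R a0 z0 k)))^2
                 + (real k + 1) * (saddle_op L (eag_z L R a0 z0 k) \<bullet> (eag_z L R a0 z0 k - z0))"
  shows "V (Suc k) \<le> V k"
proof -
  define K where "K = real k + 2"
  define al where "al = eag_alpha R a0 k"
  define al' where "al' = eag_alpha R a0 (Suc k)"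
  define z where "z = eag_z L R a0 z0 k"
  define u where "u = z - z0"
  define g where "g = saddle_op L z"
  define w where "w = z + (1 / K) *\<^sub>R (z0 - z) - al *\<^sub>R g"
  define h where "h = saddle_op L w"
  define z' where "z' = z + (1 / K) *\<^sub>R (z0 - z) - al *\<^sub>R h"
  define p where "p = saddle_op L z'"
  have zS: "eag_z L R a0 z0 (Suc k) = z'"
    unfolding z'_def h_def w_def g_def z_def al_def K_def by (simp add: Let_def)
  have K2: "K \<ge> 2" unfolding K_def by simp
  have alp: "0 < al" and alr: "al^2 * R^2 < 1"
    using alpha_facts(1)[OF R a0, where k=k] alpha_facts(2)[OF R a0] alpha_facts(4)[OF R a0, where k=k] unfolding al_def by auto
  have al'eq: "al' = al * (1 - 1 / ((K - 1) * (K + 1)) * (al^2 * R^2 / (1 - al^2 * R^2)))"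
    unfolding al'_def al_def K_def alpha_Suc by (simp add: add.commute)
  have e1: "z' - z = - (1/K) *\<^sub>R u - al *\<^sub>R h" unfolding z'_def u_def by (simp add: algebra_simps)
  have e2: "w - z' = al *\<^sub>R (h - g)" unfolding z'_def w_def by (simp add: algebra_simps)
  have e3: "z' - z0 = (1 - 1/K) *\<^sub>R u - al *\<^sub>R h" unfolding z'_def u_def by (simp add: algebra_simps)
  have m0: "0 \<le> (p - g) \<bullet> (z' - z)" unfolding p_def g_def by (rule G_mono[OF sm cc])
  have mono: "0 \<le> - (1/K) * (p \<bullet> u - g \<bullet> u) - al * (h \<bullet> p - g \<bullet> h)"
  proof -
    have "(p - g) \<bullet> (- (1/K) *\<^sub>R u - al *\<^sub>R h) = - (1/K) * (p \<bullet> u - g \<bullet> u) - al * (p \<bullet> h - g \<bullet> h)"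
      by (simp add: inner_diff_left inner_diff_right algebra_simps)
    moreover have "p \<bullet> h = h \<bullet> p" "g \<bullet> h = g \<bullet> h" by (simp_all add: inner_commute)
    ultimately show ?thesis using m0 unfolding e1 by simp
  qed
  have l0: "norm (h - p) \<le> R * norm (w - z')" unfolding h_def p_def by (rule G_lip[OF sm])
  also have "\<dots> = R * al * norm (h - g)" unfolding e2 using alp by simp
  finally have l1: "norm (h - p) \<le> R * al * norm (h - g)" .
  have "(norm (h - p))^2 \<le> (R * al * norm (h - g))^2"
    using l1 by (intro power_mono) auto
  then have lip: "p \<bullet> p - 2 * (h \<bullet> p) + h \<bullet> h \<le> R^2 * al^2 * (g \<bullet> g - 2 * (g \<bullet> h) + h \<bullet> h)"
  proof -
    have n1: "(norm (h - p))^2 = h \<bullet> h - 2 * (h \<bullet> p) + p \<bullet> p"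
      by (simp add: power2_norm_eq_inner inner_diff_left inner_diff_right inner_commute[of p h])
    have n2: "(norm (h - g))^2 = g \<bullet> g - 2 * (g \<bullet> h) + h \<bullet> h"
      by (simp add: power2_norm_eq_inner inner_diff_left inner_diff_right inner_commute[of h g])
    show ?thesis using \<open>(norm (h - p))^2 \<le> (R * al * norm (h - g))^2\<close>
      unfolding power_mult_distrib n1 n2 by simp
  qed
  define aa where "aa = (K - 1) * K / (2 * al * R^2) - al * (K - 1) * K / 2"
  define bb where "bb = K^2 * al - 2 * ((K - 1) * K / (2 * al * R^2))"
  have "0 \<le> (aa *\<^sub>R h + (bb / 2) *\<^sub>R p) \<bullet> (aa *\<^sub>R h + (bb / 2) *\<^sub>R p)" by simp
  then have sq: "0 \<le> aa^2 * (h \<bullet> h) + aa * bb * (h \<bullet> p) + bb^2 / 4 * (p \<bullet> p)"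
    by (simp add: inner_add_left inner_add_right inner_commute[of p h] power2_eq_square algebra_simps)
  have ks: "al' * K * (K + 1) / 2 * (p \<bullet> p) + K * ((1 - 1/K) * (p \<bullet> u) - al * (h \<bullet> p))
      \<le> al * (K - 1) * K / 2 * (g \<bullet> g) + (K - 1) * (g \<bullet> u)"
    by (rule key_scalar[OF K2 alp R alr al'eq mono lip sq[unfolded aa_def bb_def]])
  have "V (Suc k) = al' * K * (K + 1) / 2 * (p \<bullet> p) + K * (p \<bullet> (z' - z0))"
    unfolding V_def zS p_def[symmetric] al'_def[symmetric] by (simp add: K_def power2_norm_eq_inner algebra_simps del: eag_alpha.simps)
  also have "p \<bullet> (z' - z0) = (1 - 1/K) * (p \<bullet> u) - al * (h \<bullet> p)"
    unfolding e3 by (simp add: inner_diff_right inner_commute[of p h])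
  finally have "V (Suc k) = al' * K * (K + 1) / 2 * (p \<bullet> p) + K * ((1 - 1/K) * (p \<bullet> u) - al * (h \<bullet> p))" .
  moreover have "V k = al * (K - 1) * K / 2 * (g \<bullet> g) + (K - 1) * (g \<bullet> u)"
    unfolding V_def g_def[symmetric] z_def[symmetric] u_def[symmetric] al_def[symmetric] by (simp add: K_def power2_norm_eq_inner algebra_simps del: eag_alpha.simps)
  ultimately show ?thesis using ks by simp
qed


theorem theorem2:
  fixes L :: "(real^'n) \<times> (real^'m) \<Rightarrow> real"
    and R a0 :: real and zs z0 :: "(real^'n) \<times> (real^'m)"
  assumes "R > 0"
    and "R_smooth R L"
    and "convex_concave L"
    and "saddle_point L zs"
    and "0 < a0" and "a0 < 3 / (4 * R)"
  shows "\<forall>k. (norm (grad L (eag_z L R a0 z0 k)))^2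
          \<le> 4 * (1 + a0 * lim (eag_alpha R a0) * R^2) / (lim (eag_alpha R a0))^2
            * (norm (z0 - zs))^2 / ((real k + 1) * (real k + 2))"
proof
  fix k
  define V where "V = (\<lambda>k. eag_alpha R a0 k * (real k + 1) * (real k + 2) / 2 * (norm (saddle_op L (eag_z L R a0 z0 k)))^2
                 + (real k + 1) * (saddle_op L (eag_z L R a0 z0 k) \<bullet> (eag_z L R a0 z0 k - z0)))"
  have step: "\<And>j. V (Suc j) \<le> V j"
    unfolding V_def by (rule V_step[OF assms(1,2,3,5,6)])
  have Vk: "V k \<le> V 0"
  proof (induction k)
    case 0 then show ?case by simp
  next
    case (Suc k) then show ?case using step[of k] by linarith
  qed
  define D where "D = norm (z0 - zs)"
  have Gzs: "saddle_op L zs = 0" by (rule G_zs[OF assms(1-4)])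
  have "norm (saddle_op L z0) \<le> R * D"
    using G_lip[OF assms(2), of z0 zs] Gzs unfolding D_def by simp
  then have "(norm (saddle_op L z0))^2 \<le> (R * D)^2" by (intro power_mono) auto
  then have V0: "V 0 \<le> a0 * R^2 * D^2"
    unfolding V_def using assms(5) by (simp add: power_mult_distrib mult_left_mono)
  define z where "z = eag_z L R a0 z0 k"
  define g where "g = saddle_op L z"
  define x where "x = norm g"
  have "0 \<le> g \<bullet> (z - zs)" unfolding g_def by (rule G_star[OF assms(2-4)])
  moreover have "g \<bullet> (z - z0) = g \<bullet> (z - zs) + g \<bullet> (zs - z0)" by (simp add: inner_diff_right)
  moreover have "- (x * D) \<le> g \<bullet> (zs - z0)"
    using Cauchy_Schwarz_ineq2[of g "zs - z0"] unfolding x_def D_def by (simp add: norm_minus_commute)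
  ultimately have low: "- (x * D) \<le> g \<bullet> (z - z0)" by linarith
  have "eag_alpha R a0 k * (real k + 1) * (real k + 2) / 2 * x^2 - (real k + 1) * x * D \<le> V k"
  proof -
    have "(real k + 1) * (- (x * D)) \<le> (real k + 1) * (g \<bullet> (z - z0))" using low by (intro mult_left_mono) auto
    then show ?thesis unfolding V_def x_def g_def z_def by (simp add: algebra_simps)
  qed
  with Vk V0 have h: "eag_alpha R a0 k * (real k + 1) * (real k + 2) / 2 * x^2 - (real k + 1) * x * D \<le> a0 * R^2 * D^2"
    by linarith
  have f: "x^2 \<le> 4 * (1 + a0 * lim (eag_alpha R a0) * R^2) / (lim (eag_alpha R a0))^2 * D^2 / ((real k + 1) * (real k + 2))"
    by (rule final_alg[OF _ alpha_lim(1)[OF assms(1,5,6)] alpha_lim(2)[OF assms(1,5,6)] _ _ assms(5) h])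
       (auto simp: x_def D_def)
  show "(norm (grad L (eag_z L R a0 z0 k)))^2
          \<le> 4 * (1 + a0 * lim (eag_alpha R a0) * R^2) / (lim (eag_alpha R a0))^2
            * (norm (z0 - zs))^2 / ((real k + 1) * (real k + 2))"
    using f unfolding x_def g_def z_def D_def norm_G .
qed

end
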